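(* Let $\widehat K_5$ be the complete graph $K_5$ (vertices $w_1,\dots,w_5$) with a pendant vertex $v_i$ attached to each $w_i$, and let $S(\widehat K_5)$ be its full edge subdivision. Let $S(\widehat K_5)(A)$ and $S(\widehat K_5)(B)$ be obtained from $S(\widehat K_5)$ by identifying the (formerly pendant) degree-one vertices $v_1,\dots,v_5$ block-wise according to the $2$-partitions $A=\{2,3\}$ and $B=\{1,4\}$ of $5$ (blocks of sizes $2,3$, resp. $1,4$, each become one vertex; all edges kept). Then these two graphs, each with $22$ vertices, are non-isomorphic, and their standard Laplacians both have spectrum $$0,\ w_-,\ z_-^{(4)},\ \widehat w_-,\ 1^{(8)},\ \widehat w_+,\ z_+^{(4)},\ w_+,\ 2,$$ where $w_\pm=1\pm\frac12\sqrt{\frac{9+\sqrt{21}}{5}}$, $\widehat w_\pm=1\pm\frac12\sqrt{\frac{9-\sqrt{21}}{5}}$, $z_\pm=1\pm\sqrt{\frac25}$, and exponents $(m)$ denote multiplicities; in particular they are isospectral for the standard Laplacian (and, being bipartite, for the signless standard Laplacian).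
   Context: The edge subdivision of a graph $G$, denoted $S(G)$, replaces every edge $\{u,v\}$ by a new vertex $w$ and two edges $\{u,w\},\{w,v\}$. The standard Laplacian of a graph is $(\Delta_G f)(v)=f(v)-\frac{1}{\deg v}\sum_{u\in N_v}f(u)$ and the signless standard Laplacian is $(\Delta_{G^+}f)(v)=f(v)+\frac{1}{\deg v}\sum_{u\in N_v}f(u)$, where $N_v$ is the set of neighbours of $v$ and $\deg v=|N_v|$. *)

theory Defs
  imports Complex_Main "Jordan_Normal_Form.Char_Poly"
begin

(* A finite simple graph: a vertex set together with a set of edges, each edge a 2-element subset. *)
type_synonym 'a graph = "'a set \<times> 'a set set"

definition verts :: "'a graph \<Rightarrow> 'a set" where "verts G = fst G"
definition edges :: "'a graph \<Rightarrow> 'a set set" where "edges G = snd G"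

definition nbrs :: "'a graph \<Rightarrow> 'a \<Rightarrow> 'a set" where
  "nbrs G v = {u \<in> verts G. {u, v} \<in> edges G}"

definition deg :: "'a graph \<Rightarrow> 'a \<Rightarrow> nat" where
  "deg G v = card (nbrs G v)"

definition std_lap :: "'a graph \<Rightarrow> ('a \<Rightarrow> real) \<Rightarrow> 'a \<Rightarrow> real" where
  "std_lap G f v = f v - (1 / real (deg G v)) * (\<Sum>u\<in>nbrs G v. f u)"

definition signless_std_lap :: "'a graph \<Rightarrow> ('a \<Rightarrow> real) \<Rightarrow> 'a \<Rightarrow> real" where
  "signless_std_lap G f v = f v + (1 / real (deg G v)) * (\<Sum>u\<in>nbrs G v. f u)"

definition op_mat :: "(('a \<Rightarrow> real) \<Rightarrow> 'a \<Rightarrow> real) \<Rightarrow> 'a list \<Rightarrow> real mat" where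
  "op_mat T vs = mat (length vs) (length vs)
     (\<lambda>(i, j). T (\<lambda>u. if u = vs ! j then 1 else 0) (vs ! i))"

definition enumerates :: "'a graph \<Rightarrow> 'a list \<Rightarrow> bool" where
  "enumerates G vs \<longleftrightarrow> distinct vs \<and> set vs = verts G"

definition has_spectrum :: "real mat \<Rightarrow> real list \<Rightarrow> bool" where
  "has_spectrum M ls \<longleftrightarrow> char_poly M = (\<Prod>l\<leftarrow>ls. [:- l, 1:])"

definition graph_iso :: "'a graph \<Rightarrow> 'b graph \<Rightarrow> bool" where
  "graph_iso G H \<longleftrightarrow> (\<exists>f. bij_betw f (verts G) (verts H) \<and>
      (\<forall>x\<in>verts G. \<forall>y\<in>verts G. {x, y} \<in> edges G \<longleftrightarrow> {f x, f y} \<in> edges H))"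

definition subdivision :: "'a graph \<Rightarrow> ('a + 'a set) graph" where
  "subdivision G = (Inl ` verts G \<union> Inr ` edges G,
                    {{Inl u, Inr e} | u e. e \<in> edges G \<and> u \<in> e})"

definition identify :: "('a \<Rightarrow> 'b) \<Rightarrow> 'a graph \<Rightarrow> 'b graph" where
  "identify q G = (q ` verts G, (\<lambda>e. q ` e) ` edges G)"

(* K5 with a pendant vertex: W i = w_i, P i = v_i, i = 1..5 *)
datatype k5v = W nat | P nat

definition K5hat :: "k5v graph" where
  "K5hat = ({W i | i. i \<in> {1..5}} \<union> {P i | i. i \<in> {1..5}},
            {{W i, W j} | i j. i \<in> {1..5} \<and> j \<in> {1..5} \<and> i \<noteq> j}
            \<union> {{W i, P i} | i. i \<in> {1..5}})"

definition glue :: "nat set \<Rightarrow> k5v + k5v set \<Rightarrow> k5v + k5v set" where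
  "glue S x = (case x of Inl (P i) \<Rightarrow> Inl (P (if i \<in> S then 0 else 6)) | _ \<Rightarrow> x)"

definition SK5hat_glued :: "nat set \<Rightarrow> (k5v + k5v set) graph" where
  "SK5hat_glued S = identify (glue S) (subdivision K5hat)"

(* partition A = {2,3}: blocks {v1,v2}, {v3,v4,v5};  partition B = {1,4}: blocks {v1}, {v2,...,v5} *)
definition SK5hat_A :: "(k5v + k5v set) graph" where "SK5hat_A = SK5hat_glued {1, 2}"
definition SK5hat_B :: "(k5v + k5v set) graph" where "SK5hat_B = SK5hat_glued {1}"

definition w_minus :: real where "w_minus = 1 - (1/2) * sqrt ((9 + sqrt 21) / 5)"
definition w_plus :: real where "w_plus = 1 + (1/2) * sqrt ((9 + sqrt 21) / 5)"
definition wh_minus :: real where "wh_minus = 1 - (1/2) * sqrt ((9 - sqrt 21) / 5)"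
definition wh_plus :: real where "wh_plus = 1 + (1/2) * sqrt ((9 - sqrt 21) / 5)"
definition z_minus :: real where "z_minus = 1 - sqrt (2 / 5)"
definition z_plus :: real where "z_plus = 1 + sqrt (2 / 5)"

definition spec9 :: "real list" where
  "spec9 = [0, w_minus] @ replicate 4 z_minus @ [wh_minus] @ replicate 8 1
           @ [wh_plus] @ replicate 4 z_plus @ [w_plus, 2]"

end

theory Submission
  imports Defs
begin


lemma pcompose_hom: "comm_ring_hom (\<lambda>p. pcompose p q)"
  by unfold_locales (simp_all add: pcompose_add pcompose_mult pcompose_1)

lemma schur_det:
  fixes y :: "'a::idom"
  assumes BB: "BB \<in> carrier_mat n m" and CC: "CC \<in> carrier_mat m n"
  shows "det (four_block_mat (y \<cdot>\<^sub>m 1\<^sub>m n) BB CC (y \<cdot>\<^sub>m 1\<^sub>m m)) * y ^ n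
       = det ((y * y) \<cdot>\<^sub>m 1\<^sub>m n - BB * CC) * y ^ m"
proof -
  let ?M = "four_block_mat (y \<cdot>\<^sub>m 1\<^sub>m n) BB CC (y \<cdot>\<^sub>m 1\<^sub>m m)"
  let ?N = "four_block_mat (y \<cdot>\<^sub>m 1\<^sub>m n) (0\<^sub>m n m) (- CC) (1\<^sub>m m)"
  have M: "?M \<in> carrier_mat (n+m) (n+m)" using BB CC by auto
  have N: "?N \<in> carrier_mat (n+m) (n+m)" using BB CC by auto
  have PQ: "BB * CC \<in> carrier_mat n n" using BB CC by auto
  have "?M * ?N = four_block_mat
      (y \<cdot>\<^sub>m 1\<^sub>m n * (y \<cdot>\<^sub>m 1\<^sub>m n) + BB * - CC) (y \<cdot>\<^sub>m 1\<^sub>m n * 0\<^sub>m n m + BB * 1\<^sub>m m)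
      (CC * (y \<cdot>\<^sub>m 1\<^sub>m n) + y \<cdot>\<^sub>m 1\<^sub>m m * - CC) (CC * 0\<^sub>m n m + y \<cdot>\<^sub>m 1\<^sub>m m * 1\<^sub>m m)"
    by (rule mult_four_block_mat, insert BB CC, auto)
  also have "\<dots> = four_block_mat ((y * y) \<cdot>\<^sub>m 1\<^sub>m n - BB * CC) BB (0\<^sub>m m n) (y \<cdot>\<^sub>m 1\<^sub>m m)"
  proof (rule cong_four_block_mat)
    show "y \<cdot>\<^sub>m 1\<^sub>m n * (y \<cdot>\<^sub>m 1\<^sub>m n) + BB * - CC = (y * y) \<cdot>\<^sub>m 1\<^sub>m n - BB * CC"
      by (rule eq_matI, insert BB CC, auto simp: minus_add_uminus_mat)
    show "y \<cdot>\<^sub>m 1\<^sub>m n * 0\<^sub>m n m + BB * 1\<^sub>m m = BB" using BB by auto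
    show "CC * (y \<cdot>\<^sub>m 1\<^sub>m n) + y \<cdot>\<^sub>m 1\<^sub>m m * - CC = 0\<^sub>m m n"
      by (rule eq_matI, insert BB CC, auto)
    show "CC * 0\<^sub>m n m + y \<cdot>\<^sub>m 1\<^sub>m m * 1\<^sub>m m = y \<cdot>\<^sub>m 1\<^sub>m m" using CC by auto
  qed
  finally have MN: "?M * ?N = four_block_mat ((y * y) \<cdot>\<^sub>m 1\<^sub>m n - BB * CC) BB (0\<^sub>m m n) (y \<cdot>\<^sub>m 1\<^sub>m m)" .
  have "det ?M * det ?N = det (?M * ?N)" using det_mult[OF M N] ..
  also have "\<dots> = det ((y * y) \<cdot>\<^sub>m 1\<^sub>m n - BB * CC) * det (y \<cdot>\<^sub>m 1\<^sub>m m)"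
    unfolding MN by (rule det_four_block_mat_lower_left_zero, insert BB CC, auto)
  also have "det (y \<cdot>\<^sub>m 1\<^sub>m m) = y ^ m" by (simp add: det_smult)
  also have "det ?N = det (y \<cdot>\<^sub>m 1\<^sub>m n) * det (1\<^sub>m m :: 'a mat)"
    by (rule det_four_block_mat_upper_right_zero, insert BB CC, auto)
  also have "det (y \<cdot>\<^sub>m 1\<^sub>m n) = y ^ n" by (simp add: det_smult)
  finally show ?thesis by simp
qed

lemma map_neg_mult:
  fixes B :: "'a::comm_ring_1 mat"
  assumes B: "B \<in> carrier_mat n m" and C: "C \<in> carrier_mat m n"
  shows "map_mat (\<lambda>a. [:- a:]) B * map_mat (\<lambda>a. [:- a:]) C = map_mat (\<lambda>a. [:a:]) (B * C)"
proof -
  have "map_mat (\<lambda>a. [:- a:]) B = map_mat (\<lambda>a. [:a:]) (- B)"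
    by (rule eq_matI, auto)
  moreover have "map_mat (\<lambda>a. [:- a:]) C = map_mat (\<lambda>a. [:a:]) (- C)"
    by (rule eq_matI, auto)
  moreover have "map_mat (\<lambda>a. [:a:]) (- B) * map_mat (\<lambda>a. [:a:]) (- C) = map_mat (\<lambda>a. [:a:]) (- B * - C)"
    by (rule map_poly_mult[symmetric], insert B C, auto)
  moreover have "- B * - C = B * C" using B C by simp
  ultimately show ?thesis by simp
qed

lemma char_poly_bip:
  fixes B :: "'a::idom mat"
  assumes B: "B \<in> carrier_mat n m" and C: "C \<in> carrier_mat m n" and k: "m = n + k"
  shows "char_poly (four_block_mat (1\<^sub>m n) B C (1\<^sub>m m))
     = pcompose (char_poly (B * C)) ([:-1,1:] * [:-1,1:]) * [:-1,1:] ^ k"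
proof -
  let ?y = "[:-1,1:] :: 'a poly"
  let ?mB = "map_mat (\<lambda>a. [:- a:]) B" and ?mC = "map_mat (\<lambda>a. [:- a:]) C"
  have cpm: "char_poly_matrix (four_block_mat (1\<^sub>m n) B C (1\<^sub>m m))
     = four_block_mat (?y \<cdot>\<^sub>m 1\<^sub>m n) ?mB ?mC (?y \<cdot>\<^sub>m 1\<^sub>m m)"
    unfolding char_poly_matrix_def
    by (rule eq_matI, insert B C, auto simp: one_pCons)
  have D: "B * C \<in> carrier_mat n n" using B C by auto
  have hom: "det (?y * ?y \<cdot>\<^sub>m 1\<^sub>m n - map_mat (\<lambda>a. [:a:]) (B * C))
      = pcompose (char_poly (B * C)) (?y * ?y)"
  proof -
    have "map_mat (\<lambda>p. pcompose p (?y * ?y)) (char_poly_matrix (B * C))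
        = ?y * ?y \<cdot>\<^sub>m 1\<^sub>m n - map_mat (\<lambda>a. [:a:]) (B * C)"
      unfolding char_poly_matrix_def
      by (rule eq_matI, insert B C, auto simp: pcompose_add pcompose_pCons)
    then show ?thesis unfolding char_poly_def
      using comm_ring_hom.hom_det[OF pcompose_hom] by metis
  qed
  have "char_poly (four_block_mat (1\<^sub>m n) B C (1\<^sub>m m)) * ?y ^ n
      = det ((?y * ?y) \<cdot>\<^sub>m 1\<^sub>m n - ?mB * ?mC) * ?y ^ m"
    unfolding char_poly_def cpm by (rule schur_det, insert B C, auto)
  also have "?mB * ?mC = map_mat (\<lambda>a. [:a:]) (B * C)" by (rule map_neg_mult[OF B C])
  also have "?y ^ m = ?y ^ k * ?y ^ n" by (simp add: k power_add)
  finally have "char_poly (four_block_mat (1\<^sub>m n) B C (1\<^sub>m m)) * ?y ^ n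
     = (pcompose (char_poly (B * C)) (?y * ?y) * ?y ^ k) * ?y ^ n" unfolding hom by simp
  moreover have "?y ^ n \<noteq> 0" by simp
  ultimately show ?thesis by (metis mult_right_cancel)
qed





lemma pcompose_power': "pcompose (p ^ n) q = (pcompose p q) ^ n"
  by (induct n) (simp_all add: pcompose_mult pcompose_1)

lemma lin_pair: "[:- a, 1:] * [:- b, 1:] = [:a * b, - (a + b), 1::'a::comm_ring_1:]"
  by (simp add: algebra_simps)

lemma quad_pair: "[:a, -2, 1:] * [:b, -2, 1:] = [:a * b, -2 * (a + b), a + b + 4, -4, 1::'a::comm_ring_1:]"
  by (simp add: algebra_simps)

lemma z_pair: "[:- z_minus, 1:] * [:- z_plus, 1:] = [:3/5, -2, 1:]"
proof -
  have "z_minus * z_plus = 3/5" unfolding z_minus_def z_plus_def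
    by (simp add: algebra_simps power2_eq_square[symmetric])
  moreover have "z_minus + z_plus = 2" unfolding z_minus_def z_plus_def by simp
  ultimately show ?thesis unfolding lin_pair by simp
qed

lemma w_pair: "[:- w_minus, 1:] * [:- w_plus, 1:] = [:(11 - sqrt 21)/20, -2, 1:]"
proof -
  have pos: "0 \<le> (9 + sqrt 21) / 5" by simp
  have "w_minus * w_plus = 1 - (sqrt ((9 + sqrt 21) / 5))^2 / 4" unfolding w_minus_def w_plus_def
    by (simp add: algebra_simps power2_eq_square)
  also have "\<dots> = (11 - sqrt 21)/20" using pos by (simp add: field_simps)
  finally have "w_minus * w_plus = (11 - sqrt 21)/20" .
  moreover have "w_minus + w_plus = 2" unfolding w_minus_def w_plus_def by simp
  ultimately show ?thesis unfolding lin_pair by simp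
qed

lemma wh_pair: "[:- wh_minus, 1:] * [:- wh_plus, 1:] = [:(11 + sqrt 21)/20, -2, 1:]"
proof -
  have "sqrt (21::real) \<le> 9" using real_sqrt_le_mono[of 21 81] by simp
  then have pos: "0 \<le> (9 - sqrt 21) / 5" by simp
  have "wh_minus * wh_plus = 1 - (sqrt ((9 - sqrt 21) / 5))^2 / 4" unfolding wh_minus_def wh_plus_def
    by (simp add: algebra_simps power2_eq_square)
  also have "\<dots> = (11 + sqrt 21)/20" using pos by (simp add: field_simps)
  finally have "wh_minus * wh_plus = (11 + sqrt 21)/20" .
  moreover have "wh_minus + wh_plus = 2" unfolding wh_minus_def wh_plus_def by simp
  ultimately show ?thesis unfolding lin_pair by simp
qed

lemma quartic: "[:(11 - sqrt 21)/20, -2, 1:] * [:(11 + sqrt 21)/20, -2, 1::real:] = [:1/4, -11/5, 51/10, -4, 1:]"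
proof -
  have "(11 - sqrt 21)/20 * ((11 + sqrt 21)/20) = (121 - (sqrt 21)^2) / 400"
    by (simp add: algebra_simps power2_eq_square)
  also have "\<dots> = 1/4" by simp
  finally have pr: "(11 - sqrt 21)/20 * ((11 + sqrt 21)/20) = 1/4" .
  have sm: "(11 - sqrt 21)/20 + (11 + sqrt 21)/20 = 11/10" by (simp add: field_simps)
  show ?thesis unfolding quad_pair pr sm by simp
qed

lemma target_poly:
  "pcompose ([:3/20,-9/10,1:] * ([:-1,1:] * [:-2/5,1:]^4)) ([:-1,1:] * [:-1,1:]) * [:-1,1:] ^ 8
   = (\<Prod>l\<leftarrow>spec9. [:- l, 1::real:])"
proof -
  let ?q = "[:-1,1:] * [:-1,1::real:]"
  have h: "comm_ring_hom (\<lambda>p. pcompose p ?q)" by (rule pcompose_hom)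
  have a: "pcompose [:3/20,-9/10,1:] ?q = [:1/4, -11/5, 51/10, -4, 1:]"
    by (simp add: pcompose_pCons algebra_simps)
  have b: "pcompose [:-1,1:] ?q = [:0,1:] * [:-2,1::real:]"
    by (simp add: pcompose_pCons algebra_simps)
  have c: "pcompose [:-2/5,1:] ?q = [:3/5,-2,1::real:]"
    by (simp add: pcompose_pCons algebra_simps)
  have "pcompose ([:3/20,-9/10,1:] * ([:-1,1:] * [:-2/5,1:]^4)) ?q
      = pcompose [:3/20,-9/10,1:] ?q * (pcompose [:-1,1:] ?q * (pcompose [:-2/5,1:] ?q)^4)"
    by (simp only: pcompose_mult pcompose_power')
  also have "\<dots> = ([:- w_minus, 1:] * [:- w_plus, 1:]) * ([:- wh_minus, 1:] * [:- wh_plus, 1:])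
      * ([:0,1:] * [:-2,1::real:] * ([:- z_minus, 1:] * [:- z_plus, 1:])^4)"
    unfolding a b c w_pair wh_pair z_pair quartic by simp
  finally have e: "pcompose ([:3/20,-9/10,1:] * ([:-1,1:] * [:-2/5,1:]^4)) ?q = \<dots>" .
  have f: "(\<Prod>l\<leftarrow>spec9. [:- l, 1::real:]) = [:0,1:] * [:- w_minus, 1:] * [:- z_minus, 1:]^4
     * [:- wh_minus, 1:] * [:-1,1:]^8 * [:- wh_plus, 1:] * [:- z_plus, 1:]^4 * [:- w_plus, 1:] * [:-2,1:]"
    unfolding spec9_def by (simp only: map_append list.map map_replicate prod_list.append prod_list_replicate prod_list.Cons prod_list.Nil mult_1_right mult.assoc minus_zero)
  show ?thesis unfolding e f by (simp only: power_mult_distrib ac_simps)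
qed



definition lmul :: "nat \<Rightarrow> 'a::comm_semiring_1 list list \<Rightarrow> 'a list list \<Rightarrow> 'a list list" where
  "lmul nc xs ys = map (\<lambda>r. map (\<lambda>j. sum_list (map2 (*) r (map (\<lambda>y. y ! j) ys))) [0..<nc]) xs"

lemma sum_list_map2_nth: "length r = length ys \<Longrightarrow>
  sum_list (map2 (*) r (map (\<lambda>y. y ! j) ys)) = (\<Sum>l<length ys. r ! l * ys ! l ! j)"
proof (induction r arbitrary: ys)
  case Nil then show ?case by simp
next
  case (Cons a r)
  then obtain y ys' where ys: "ys = y # ys'" by (cases ys) auto
  with Cons show ?case by (simp del: sum.lessThan_Suc add: sum.lessThan_Suc_shift)
qed

lemma lmul_correct:
  assumes "\<forall>r\<in>set xs. length r = length ys" "\<forall>r\<in>set ys. length r = nc"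
  shows "mat_of_rows_list (length ys) xs * mat_of_rows_list nc ys = mat_of_rows_list nc (lmul nc xs ys)"
proof (rule eq_matI)
  fix i j assume i: "i < dim_row (mat_of_rows_list nc (lmul nc xs ys))"
    and j: "j < dim_col (mat_of_rows_list nc (lmul nc xs ys))"
  then have i': "i < length xs" and j': "j < nc" by (auto simp: mat_of_rows_list_def lmul_def)
  have "(mat_of_rows_list (length ys) xs * mat_of_rows_list nc ys) $$ (i, j)
     = (\<Sum>l<length ys. xs ! i ! l * ys ! l ! j)"
    using i' j' by (auto simp: mat_of_rows_list_def scalar_prod_def row_def col_def
      intro!: sum.cong)
  also have "\<dots> = mat_of_rows_list nc (lmul nc xs ys) $$ (i, j)"
    using i' j' assms by (simp add: mat_of_rows_list_def lmul_def sum_list_map2_nth)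
  finally show "(mat_of_rows_list (length ys) xs * mat_of_rows_list nc ys) $$ (i, j) =
         mat_of_rows_list nc (lmul nc xs ys) $$ (i, j)" .
qed (auto simp: mat_of_rows_list_def lmul_def)

lemma lmul_correct':
  assumes "n = length ys" "\<forall>r\<in>set xs. length r = n" "\<forall>r\<in>set ys. length r = nc"
  shows "mat_of_rows_list n xs * mat_of_rows_list nc ys = mat_of_rows_list nc (lmul nc xs ys)"
  using lmul_correct assms by blast

definition CA :: "real mat" where "CA = mat_of_rows_list 7
 [[1/2,1/10,1/10,1/10,1/10,1/10,0],
  [1/10,1/2,1/10,1/10,1/10,1/10,0],
  [1/10,1/10,1/2,1/10,1/10,0,1/10],
  [1/10,1/10,1/10,1/2,1/10,0,1/10],
  [1/10,1/10,1/10,1/10,1/2,0,1/10],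
  [1/4,1/4,0,0,0,1/2,0],
  [0,0,1/6,1/6,1/6,0,1/2]]"
definition PA :: "real mat" where "PA = mat_of_rows_list 7
 [[(-3/2),0,1,(-1),0,0,(-2/5)],
  [(-3/2),0,1,1,0,0,0],
  [1,0,1,0,(-1),(-1),(-3/5)],
  [1,0,1,0,1,0,0],
  [1,0,1,0,0,1,0],
  [0,(-3/2),1,0,0,0,1],
  [0,1,1,0,0,0,1]]"
definition QA :: "real mat" where "QA = mat_of_rows_list 7
 [[(-1/5),(-1/5),2/15,2/15,2/15,0,0],
  [0,0,0,0,0,(-2/5),2/5],
  [1/6,1/6,1/6,1/6,1/6,1/15,1/10],
  [(-7/15),8/15,1/30,1/30,1/30,(-1/15),(-1/10)],
  [1/30,1/30,(-3/10),7/10,(-3/10),(-1/15),(-1/10)],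
  [1/30,1/30,(-3/10),(-3/10),7/10,(-1/15),(-1/10)],
  [(-1/6),(-1/6),(-1/6),(-1/6),(-1/6),1/3,1/2]]"
definition T7 :: "real mat" where "T7 = mat_of_rows_list 7
 [[2/5,1/10,0,0,0,0,0],
  [1/2,1/2,0,0,0,0,0],
  [0,0,1,0,0,0,0],
  [0,0,0,2/5,0,0,0],
  [0,0,0,0,2/5,0,0],
  [0,0,0,0,0,2/5,0],
  [0,0,0,0,0,0,2/5]]"
definition CB :: "real mat" where "CB = mat_of_rows_list 7
 [[1/2,1/10,1/10,1/10,1/10,1/10,0],
  [1/10,1/2,1/10,1/10,1/10,0,1/10],
  [1/10,1/10,1/2,1/10,1/10,0,1/10],
  [1/10,1/10,1/10,1/2,1/10,0,1/10],
  [1/10,1/10,1/10,1/10,1/2,0,1/10],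
  [1/2,0,0,0,0,1/2,0],
  [0,1/8,1/8,1/8,1/8,0,1/2]]"
definition PB :: "real mat" where "PB = mat_of_rows_list 7
 [[(-4),0,1,0,0,0,(-1/5)],
  [1,0,1,(-1),(-1),(-1),(-4/5)],
  [1,0,1,1,0,0,0],
  [1,0,1,0,1,0,0],
  [1,0,1,0,0,1,0],
  [0,(-4),1,0,0,0,1],
  [0,1,1,0,0,0,1]]"
definition QB :: "real mat" where "QB = mat_of_rows_list 7
 [[(-1/5),1/20,1/20,1/20,1/20,0,0],
  [0,0,0,0,0,(-1/5),1/5],
  [1/6,1/6,1/6,1/6,1/6,1/30,2/15],
  [1/30,(-13/60),47/60,(-13/60),(-13/60),(-1/30),(-2/15)],
  [1/30,(-13/60),(-13/60),47/60,(-13/60),(-1/30),(-2/15)],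
  [1/30,(-13/60),(-13/60),(-13/60),47/60,(-1/30),(-2/15)],
  [(-1/6),(-1/6),(-1/6),(-1/6),(-1/6),1/6,2/3]]"

lemma four_block_rows:
  assumes "length A = length B" "length C = length D"
    "\<forall>r\<in>set A. length r = c1" "\<forall>r\<in>set C. length r = c1"
    "\<forall>r\<in>set B. length r = c2" "\<forall>r\<in>set D. length r = c2"
  shows "four_block_mat (mat_of_rows_list c1 A) (mat_of_rows_list c2 B) (mat_of_rows_list c1 C) (mat_of_rows_list c2 D)
    = mat_of_rows_list (c1 + c2) (map2 (@) A B @ map2 (@) C D)"
  by (rule eq_matI, insert assms, auto simp: mat_of_rows_list_def nth_append)

lemma zero_rows: "0\<^sub>m r c = mat_of_rows_list c (replicate r (replicate c 0))"
  by (rule eq_matI, auto simp: mat_of_rows_list_def)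

lemma one_rows: "1\<^sub>m n = mat_of_rows_list n (map (\<lambda>i. map (\<lambda>j. if i = j then 1 else 0) [0..<n]) [0..<n])"
  by (rule eq_matI, auto simp: mat_of_rows_list_def)

lemma carrier_rows: "length xs = r \<Longrightarrow> mat_of_rows_list c xs \<in> carrier_mat r c"
  by (simp add: mat_of_rows_list_def)

lemma CPA: "CA * PA = PA * T7"
  unfolding CA_def PA_def T7_def by (simp add: lmul_correct' lmul_def upt_rec)
lemma QPA: "QA * PA = 1\<^sub>m 7"
  unfolding QA_def PA_def one_rows by (simp add: lmul_correct' lmul_def upt_rec)
lemma CPB: "CB * PB = PB * T7"
  unfolding CB_def PB_def T7_def by (simp add: lmul_correct' lmul_def upt_rec)
lemma QPB: "QB * PB = 1\<^sub>m 7"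
  unfolding QB_def PB_def one_rows by (simp add: lmul_correct' lmul_def upt_rec)

lemma sim_from:
  fixes C :: "'a::field mat"
  assumes C: "C \<in> carrier_mat n n" and Pc: "Pm \<in> carrier_mat n n" and Qc: "Qm \<in> carrier_mat n n"
    and Tm: "Tm \<in> carrier_mat n n" and CP: "C * Pm = Pm * Tm" and QP: "Qm * Pm = 1\<^sub>m n"
  shows "char_poly C = char_poly Tm"
proof -
  have PQ: "Pm * Qm = 1\<^sub>m n" using mat_mult_left_right_inverse[OF Qc Pc QP] .
  have "C = C * (Pm * Qm)" using C PQ by simp
  also have "\<dots> = (C * Pm) * Qm" using C Pc Qc by (simp add: assoc_mult_mat)
  also have "\<dots> = Pm * Tm * Qm" unfolding CP ..
  finally have CE: "C = Pm * Tm * Qm" .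
  have "similar_mat_wit C Tm Pm Qm"
    unfolding similar_mat_wit_def Let_def using C Pc Qc Tm PQ QP CE by auto
  then have "similar_mat C Tm" unfolding similar_mat_def by blast
  then show ?thesis by (rule char_poly_similar)
qed

lemma cpA: "char_poly CA = char_poly T7"
  by (rule sim_from[OF _ _ _ _ CPA QPA], auto simp: CA_def PA_def QA_def T7_def carrier_rows)
lemma cpB: "char_poly CB = char_poly T7"
  by (rule sim_from[OF _ _ _ _ CPB QPB], auto simp: CB_def PB_def QB_def T7_def carrier_rows)

definition K2 :: "real mat" where "K2 = mat_of_rows_list 2 [[2/5,1/10],[1/2,1/2]]"
definition Dg5 :: "real mat" where "Dg5 = mat_of_rows_list 5 [[1,0,0,0,0],[0,2/5,0,0,0],[0,0,2/5,0,0],[0,0,0,2/5,0],[0,0,0,0,2/5]]"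

lemma T7_blocks: "T7 = four_block_mat K2 (0\<^sub>m 2 5) (0\<^sub>m 5 2) Dg5"
  unfolding T7_def K2_def Dg5_def zero_rows
  by (subst four_block_rows, auto simp: numeral_eq_Suc)

lemma char_poly_four_block_lower_zero:
  fixes A1 :: "'a::idom mat"
  assumes A1: "A1 \<in> carrier_mat n n" and A2: "A2 \<in> carrier_mat n m" and A3: "A3 \<in> carrier_mat m m"
  shows "char_poly (four_block_mat A1 A2 (0\<^sub>m m n) A3) = char_poly A1 * char_poly A3"
proof -
  let ?cm = "\<lambda> A. [:0, 1:] \<cdot>\<^sub>m 1\<^sub>m (dim_row A) + map_mat (\<lambda>a. [:- a:]) A"
  let ?B2 = "map_mat (\<lambda>a. [:- a:]) A2"
  have "char_poly (four_block_mat A1 A2 (0\<^sub>m m n) A3) = det (?cm (four_block_mat A1 A2 (0\<^sub>m m n) A3))"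
    unfolding char_poly_defs using A1 A3 by simp
  also have "?cm (four_block_mat A1 A2 (0\<^sub>m m n) A3) = four_block_mat (?cm A1) ?B2 (0\<^sub>m m n) (?cm A3)"
    by (rule eq_matI, insert A1 A2 A3, auto)
  also have "det \<dots> = det (?cm A1) * det (?cm A3)"
    by (rule det_four_block_mat_lower_left_zero[OF _ _ refl], insert A1 A2 A3, auto)
  also have "\<dots> = char_poly A1 * char_poly A3" unfolding char_poly_defs ..
  finally show ?thesis .
qed

lemma cpDg5: "char_poly Dg5 = [:-1,1:] * [:-2/5,1:]^4"
proof -
  have ut: "upper_triangular Dg5"
    unfolding Dg5_def upper_triangular_def by (auto simp: mat_of_rows_list_def less_Suc_eq numeral_eq_Suc)
  have "char_poly Dg5 = (\<Prod>a\<leftarrow>diag_mat Dg5. [:- a, 1:])"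
    by (rule char_poly_upper_triangular[of Dg5 5, OF _ ut], auto simp: Dg5_def carrier_rows)
  also have "diag_mat Dg5 = [1,2/5,2/5,2/5,2/5]"
    unfolding Dg5_def diag_mat_def by (simp add: mat_of_rows_list_def upt_rec)
  finally show ?thesis by (simp add: power4_eq_xxxx)
qed

lemma det2:
  fixes X :: "'a::comm_ring_1 mat"
  assumes X: "X \<in> carrier_mat 2 2"
  shows "det X = X $$ (0,0) * X $$ (1,1) - X $$ (1,0) * X $$ (0,1)"
proof -
  have "det X = (\<Sum>i<2. X $$ (i,0) * cofactor X i 0)"
    by (rule laplace_expansion_column[OF X], simp)
  also have "\<dots> = X $$ (0,0) * cofactor X 0 0 + X $$ (1,0) * cofactor X 1 0"
    by (simp add: numeral_2_eq_2)
  also have "cofactor X 0 0 = X $$ (1,1)"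
  proof -
    have c: "mat_delete X 0 0 \<in> carrier_mat 1 1" using X by (auto simp: mat_delete_def)
    show ?thesis unfolding cofactor_def det_single[OF c] using X
      by (simp add: mat_delete_def insert_index_def)
  qed
  also have "cofactor X 1 0 = - X $$ (0,1)"
  proof -
    have c: "mat_delete X 1 0 \<in> carrier_mat 1 1" using X by (auto simp: mat_delete_def)
    show ?thesis unfolding cofactor_def det_single[OF c] using X
      by (simp add: mat_delete_def insert_index_def)
  qed
  finally show ?thesis by simp
qed

lemma cpK2: "char_poly K2 = [:3/20,-9/10,1:]"
proof -
  have cm: "char_poly_matrix K2 \<in> carrier_mat 2 2" by (auto simp: K2_def carrier_rows)
  show ?thesis
    unfolding char_poly_def det2[OF cm]
    by (simp add: K2_def char_poly_matrix_def mat_of_rows_list_def one_pCons)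
qed

lemma cpT7: "char_poly T7 = [:3/20,-9/10,1:] * ([:-1,1:] * [:-2/5,1:]^4)"
proof -
  have "char_poly T7 = char_poly K2 * char_poly Dg5"
    unfolding T7_blocks by (rule char_poly_four_block_lower_zero, auto simp: K2_def Dg5_def carrier_rows)
  then show ?thesis by (simp only: cpK2 cpDg5)
qed




definition gk :: "nat set \<Rightarrow> k5v \<Rightarrow> k5v" where
  "gk S a = (case a of P i \<Rightarrow> P (if i \<in> S then 0 else 6) | W i \<Rightarrow> W i)"

lemma gk_simps[simp]: "gk S (W i) = W i" "gk S (P i) = P (if i \<in> S then 0 else 6)"
  by (simp_all add: gk_def)

lemma glue_Inl[simp]: "glue S (Inl a) = Inl (gk S a)"
  by (cases a) (simp_all add: glue_def)
lemma glue_Inr[simp]: "glue S (Inr e) = Inr e"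
  by (simp add: glue_def)

definition EKlist :: "k5v set list" where
  "EKlist = [{W 1,W 2},{W 1,W 3},{W 1,W 4},{W 1,W 5},{W 2,W 3},{W 2,W 4},{W 2,W 5},{W 3,W 4},{W 3,W 5},{W 4,W 5},
             {W 1,P 1},{W 2,P 2},{W 3,P 3},{W 4,P 4},{W 5,P 5}]"

definition VKlist :: "k5v list" where
  "VKlist = [W 1, W 2, W 3, W 4, W 5, P 1, P 2, P 3, P 4, P 5]"

lemma nat15: "(i::nat) \<in> {1..5} \<longleftrightarrow> i = 1 \<or> i = 2 \<or> i = 3 \<or> i = 4 \<or> i = 5"
  by auto

lemma memW: "i \<in> {1..5} \<Longrightarrow> j \<in> {1..5} \<Longrightarrow> i \<noteq> j \<Longrightarrow> {W i, W j} \<in> edges K5hat"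
  unfolding K5hat_def edges_def by auto
lemma memP: "i \<in> {1..5} \<Longrightarrow> {W i, P i} \<in> edges K5hat"
  unfolding K5hat_def edges_def by auto

lemma EK_lt: "i < j \<Longrightarrow> i \<in> {1..5} \<Longrightarrow> j \<in> {1..5} \<Longrightarrow> {W i, W j} \<in> set EKlist"
  unfolding nat15 EKlist_def by (elim disjE; simp)

lemma EK_sub: "e \<in> edges K5hat \<Longrightarrow> e \<in> set EKlist"
proof -
  assume "e \<in> edges K5hat"
  then consider i j where "e = {W i, W j}" "i \<in> {1..5}" "j \<in> {1..5}" "i \<noteq> j"
    | i where "e = {W i, P i}" "i \<in> {1..5}"
    unfolding K5hat_def edges_def by auto
  then show ?thesis
  proof cases
    case (1 i j)
    show ?thesis
    proof (cases "i < j")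
      case True then show ?thesis using 1 EK_lt by simp
    next
      case False
      then have "j < i" using 1 by simp
      then have "{W j, W i} \<in> set EKlist" using 1 EK_lt by simp
      then show ?thesis using 1 by (simp add: insert_commute)
    qed
  next
    case (2 i)
    then show ?thesis unfolding nat15 EKlist_def by (elim disjE; simp)
  qed
qed

lemma EK_sup: "e \<in> set EKlist \<Longrightarrow> e \<in> edges K5hat"
  unfolding EKlist_def using memW memP by auto

lemma EK: "edges K5hat = set EKlist"
  using EK_sub EK_sup by blast

lemma VK: "verts K5hat = set VKlist"
  unfolding K5hat_def verts_def VKlist_def
  by (auto simp: nat15)

definition vs0 :: "(k5v + k5v set) list" where
  "vs0 = [Inl (W 1), Inl (W 2), Inl (W 3), Inl (W 4), Inl (W 5), Inl (P 0), Inl (P 6)] @ map Inr EKlist"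

lemma distinct_vs0: "distinct vs0"
  unfolding vs0_def EKlist_def by (simp add: doubleton_eq_iff)

lemma length_vs0: "length vs0 = 22"
  unfolding vs0_def EKlist_def by simp

lemma set_eq_lists: "list_all (\<lambda>x. x \<in> set ys) xs \<Longrightarrow> list_all (\<lambda>x. x \<in> set xs) ys \<Longrightarrow> set xs = set ys"
  by (auto simp: list_all_iff)

lemma verts_glued0:
  "verts (SK5hat_glued S) = set (map (glue S) (map Inl VKlist @ map Inr EKlist))"
  unfolding SK5hat_glued_def identify_def subdivision_def verts_def edges_def
  using EK VK unfolding verts_def edges_def by (simp add: image_Un image_image)

lemma verts_A: "verts SK5hat_A = set vs0"
  unfolding SK5hat_A_def verts_glued0
  by (rule set_eq_lists) (simp_all add: VKlist_def EKlist_def vs0_def)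

lemma verts_B: "verts SK5hat_B = set vs0"
  unfolding SK5hat_B_def verts_glued0
  by (rule set_eq_lists) (simp_all add: VKlist_def EKlist_def vs0_def)




definition adjv :: "nat set \<Rightarrow> (k5v + k5v set) \<Rightarrow> (k5v + k5v set) \<Rightarrow> bool" where
  "adjv S x y = (case x of Inl a \<Rightarrow> (case y of Inr e \<Rightarrow> a \<in> gk S ` e | Inl _ \<Rightarrow> False)
                         | Inr e \<Rightarrow> (case y of Inl a \<Rightarrow> a \<in> gk S ` e | Inr _ \<Rightarrow> False))"

lemma adjv_simps[simp]:
  "adjv S (Inl a) (Inr e) = (a \<in> gk S ` e)" "adjv S (Inr e) (Inl a) = (a \<in> gk S ` e)"
  "adjv S (Inl a) (Inl b) = False" "adjv S (Inr e) (Inr f) = False"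
  by (simp_all add: adjv_def)

lemma edges_glued: "edges (SK5hat_glued S) = {{Inl (gk S u), Inr e} | u e. e \<in> edges K5hat \<and> u \<in> e}"
proof -
  have "edges (SK5hat_glued S) = (\<lambda>e. glue S ` e) ` {{Inl u, Inr e} | u e. e \<in> edges K5hat \<and> u \<in> e}"
    unfolding SK5hat_glued_def identify_def subdivision_def by (simp add: edges_def verts_def)
  also have "\<dots> = {glue S ` {Inl u, Inr e} | u e. e \<in> edges K5hat \<and> u \<in> e}"
    by blast
  also have "\<dots> = {{Inl (gk S u), Inr e} | u e. e \<in> edges K5hat \<and> u \<in> e}"
    by simp
  finally show ?thesis .
qed

lemma Inr_verts: "Inr e \<in> verts (SK5hat_glued S) \<Longrightarrow> e \<in> edges K5hat"
  unfolding SK5hat_glued_def identify_def subdivision_def verts_def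
  by (auto simp: edges_def verts_def glue_def split: sum.splits k5v.splits)

lemma edge_adj:
  assumes x: "x \<in> verts (SK5hat_glued S)" and y: "y \<in> verts (SK5hat_glued S)"
  shows "{x, y} \<in> edges (SK5hat_glued S) \<longleftrightarrow> adjv S x y"
proof
  assume "{x, y} \<in> edges (SK5hat_glued S)"
  then obtain u e where "e \<in> edges K5hat" "u \<in> e" "{x, y} = {Inl (gk S u), Inr e}"
    unfolding edges_glued by blast
  then show "adjv S x y" by (auto simp: doubleton_eq_iff)
next
  assume a: "adjv S x y"
  show "{x, y} \<in> edges (SK5hat_glued S)"
  proof (cases x)
    case (Inl a1)
    then obtain e where ye: "y = Inr e" and "a1 \<in> gk S ` e" using a by (cases y) auto
    then obtain u where "u \<in> e" "a1 = gk S u" by auto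
    moreover have "e \<in> edges K5hat" using Inr_verts y ye by simp
    ultimately show ?thesis unfolding edges_glued using Inl ye by blast
  next
    case (Inr e)
    then obtain a1 where ye: "y = Inl a1" and "a1 \<in> gk S ` e" using a by (cases y) auto
    then obtain u where "u \<in> e" "a1 = gk S u" by auto
    moreover have "e \<in> edges K5hat" using Inr_verts x Inr by simp
    ultimately have "{y, x} \<in> edges (SK5hat_glued S)" unfolding edges_glued using Inr ye by blast
    then show ?thesis by (simp add: insert_commute)
  qed
qed

lemma op_mat_rows:
  assumes V: "verts G = set vs" and D: "distinct vs"
    and A: "\<forall>x\<in>set vs. \<forall>y\<in>set vs. {x, y} \<in> edges G \<longleftrightarrow> R x y"
  shows "op_mat (std_lap G) vs = mat_of_rows_list (length vs)
     (map (\<lambda>v. map (\<lambda>x. (if x = v then 1 else 0) - (if R x v then 1 / real (length (filter (\<lambda>u. R u v) vs)) else 0)) vs) vs)"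
    and "op_mat (signless_std_lap G) vs = mat_of_rows_list (length vs)
     (map (\<lambda>v. map (\<lambda>x. (if x = v then 1 else 0) + (if R x v then 1 / real (length (filter (\<lambda>u. R u v) vs)) else 0)) vs) vs)"
proof -
  have nb: "nbrs G v = set (filter (\<lambda>u. R u v) vs)" if v: "v \<in> set vs" for v
    unfolding nbrs_def V using A v by auto
  have dg: "deg G v = length (filter (\<lambda>u. R u v) vs)" if v: "v \<in> set vs" for v
    unfolding deg_def nb[OF v] by (rule distinct_card, simp add: D)
  have sm: "(\<Sum>u\<in>nbrs G v. (if u = x then 1 else 0)) = (if R x v then 1 else (0::real))"
    if v: "v \<in> set vs" and x: "x \<in> set vs" for v x
    unfolding nb[OF v] using x by (simp add: sum.delta')
  show "op_mat (std_lap G) vs = mat_of_rows_list (length vs)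
     (map (\<lambda>v. map (\<lambda>x. (if x = v then 1 else 0) - (if R x v then 1 / real (length (filter (\<lambda>u. R u v) vs)) else 0)) vs) vs)"
    unfolding op_mat_def mat_of_rows_list_def
    by (rule eq_matI, auto simp: std_lap_def sm dg)
  show "op_mat (signless_std_lap G) vs = mat_of_rows_list (length vs)
     (map (\<lambda>v. map (\<lambda>x. (if x = v then 1 else 0) + (if R x v then 1 / real (length (filter (\<lambda>u. R u v) vs)) else 0)) vs) vs)"
    unfolding op_mat_def mat_of_rows_list_def
    by (rule eq_matI, auto simp: signless_std_lap_def sm dg)
qed




lemma ifmult: "(if c then 1 else 0) * (x::'a::semiring_1) = (if c then x else 0)"
  "x * (if c then 1 else 0) = (if c then x else 0)" by simp_all

lemma perm_left:
  assumes B: "B \<in> carrier_mat n m" and i: "i < n" and j: "j < m" and p: "p i < n"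
  shows "(mat n n (\<lambda>(i,j). if j = p i then 1 else 0) * B) $$ (i,j) = (B $$ (p i, j) :: 'a::comm_ring_1)"
  using B i j p by (simp add: scalar_prod_def row_def col_def ifmult sum.delta)

lemma perm_right:
  assumes B: "B \<in> carrier_mat m n" and i: "i < m" and j: "j < n" and p: "p j < n"
  shows "(B * mat n n (\<lambda>(i,j). if i = p j then 1 else 0)) $$ (i,j) = (B $$ (i, p j) :: 'a::comm_ring_1)"
  using B i j p by (simp add: scalar_prod_def row_def col_def ifmult sum.delta)

lemma op_mat_enum:
  fixes T :: "('a \<Rightarrow> real) \<Rightarrow> 'a \<Rightarrow> real"
  assumes D1: "distinct vs" and D2: "distinct ws" and S: "set vs = set ws"
  shows "char_poly (op_mat T vs) = char_poly (op_mat T ws)"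
proof -
  define n where "n = length ws"
  have len: "length vs = n" using distinct_card[OF D1] distinct_card[OF D2] S n_def by metis
  define p where "p i = (SOME j. j < n \<and> ws ! j = vs ! i)" for i
  have p: "p i < n \<and> ws ! p i = vs ! i" if i: "i < n" for i
  proof -
    have "vs ! i \<in> set ws" using S i len by (metis nth_mem)
    then have "\<exists>j. j < n \<and> ws ! j = vs ! i" unfolding n_def by (metis in_set_conv_nth)
    then show ?thesis unfolding p_def by (rule someI_ex)
  qed
  have pinj: "p i = p k \<longleftrightarrow> i = k" if "i < n" "k < n" for i k
    using p[OF that(1)] p[OF that(2)] D1 len that by (metis nth_eq_iff_index_eq)
  define Pm :: "real mat" where "Pm = mat n n (\<lambda>(i,j). if j = p i then 1 else 0)"
  define Qm :: "real mat" where "Qm = mat n n (\<lambda>(i,j). if i = p j then 1 else 0)"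
  let ?M = "op_mat T ws"
  have M: "?M \<in> carrier_mat n n" unfolding op_mat_def n_def by simp
  have Pc: "Pm \<in> carrier_mat n n" and Qc: "Qm \<in> carrier_mat n n" unfolding Pm_def Qm_def by auto
  have PQ: "Pm * Qm = 1\<^sub>m n"
  proof (rule eq_matI)
    fix i k assume "i < dim_row (1\<^sub>m n :: real mat)" "k < dim_col (1\<^sub>m n :: real mat)"
    then have i: "i < n" and k: "k < n" by auto
    have "(Pm * Qm) $$ (i,k) = Qm $$ (p i, k)" unfolding Pm_def
      by (rule perm_left[OF Qc i k], simp add: p i)
    also have "\<dots> = (if i = k then 1 else 0)" unfolding Qm_def using p[OF i] i k pinj by auto
    finally show "(Pm * Qm) $$ (i,k) = 1\<^sub>m n $$ (i,k)" using i k by simp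
  qed (use Pc Qc in auto)
  have QP: "Qm * Pm = 1\<^sub>m n" by (rule mat_mult_left_right_inverse[OF Pc Qc PQ])
  have E: "op_mat T vs = Pm * ?M * Qm"
  proof (rule eq_matI)
    fix i k assume "i < dim_row (Pm * ?M * Qm)" "k < dim_col (Pm * ?M * Qm)"
    then have i: "i < n" and k: "k < n" using Pc Qc by auto
    have PM: "Pm * ?M \<in> carrier_mat n n" using Pc M by auto
    have "(Pm * ?M * Qm) $$ (i,k) = (Pm * ?M) $$ (i, p k)" unfolding Qm_def
      by (rule perm_right[OF PM i k], simp add: p k)
    also have "\<dots> = ?M $$ (p i, p k)" unfolding Pm_def
      by (rule perm_left[OF M i], simp_all add: p i k)
    also have "\<dots> = op_mat T vs $$ (i, k)"
      unfolding op_mat_def using p[OF i] p[OF k] i k len n_def by simp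
    finally show "op_mat T vs $$ (i, k) = (Pm * ?M * Qm) $$ (i, k)" by simp
  qed (use Pc Qc len in \<open>auto simp: op_mat_def\<close>)
  have "similar_mat_wit (op_mat T vs) ?M Pm Qm"
    unfolding similar_mat_wit_def Let_def using Pc Qc M PQ QP E by auto
  then have "similar_mat (op_mat T vs) ?M" unfolding similar_mat_def by blast
  then show ?thesis by (rule char_poly_similar)
qed



definition BdA :: "real list list" where "BdA = [[1/5,1/5,1/5,1/5,0,0,0,0,0,0,1/5,0,0,0,0],
  [1/5,0,0,0,1/5,1/5,1/5,0,0,0,0,1/5,0,0,0],
  [0,1/5,0,0,1/5,0,0,1/5,1/5,0,0,0,1/5,0,0],
  [0,0,1/5,0,0,1/5,0,1/5,0,1/5,0,0,0,1/5,0],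
  [0,0,0,1/5,0,0,1/5,0,1/5,1/5,0,0,0,0,1/5],
  [0,0,0,0,0,0,0,0,0,0,1/2,1/2,0,0,0],
  [0,0,0,0,0,0,0,0,0,0,0,0,1/3,1/3,1/3]]"
definition BtA :: "real list list" where "BtA = [[1/2,1/2,0,0,0,0,0],
  [1/2,0,1/2,0,0,0,0],
  [1/2,0,0,1/2,0,0,0],
  [1/2,0,0,0,1/2,0,0],
  [0,1/2,1/2,0,0,0,0],
  [0,1/2,0,1/2,0,0,0],
  [0,1/2,0,0,1/2,0,0],
  [0,0,1/2,1/2,0,0,0],
  [0,0,1/2,0,1/2,0,0],
  [0,0,0,1/2,1/2,0,0],
  [1/2,0,0,0,0,1/2,0],
  [0,1/2,0,0,0,1/2,0],
  [0,0,1/2,0,0,0,1/2],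
  [0,0,0,1/2,0,0,1/2],
  [0,0,0,0,1/2,0,1/2]]"
definition BdB :: "real list list" where "BdB = [[1/5,1/5,1/5,1/5,0,0,0,0,0,0,1/5,0,0,0,0],
  [1/5,0,0,0,1/5,1/5,1/5,0,0,0,0,1/5,0,0,0],
  [0,1/5,0,0,1/5,0,0,1/5,1/5,0,0,0,1/5,0,0],
  [0,0,1/5,0,0,1/5,0,1/5,0,1/5,0,0,0,1/5,0],
  [0,0,0,1/5,0,0,1/5,0,1/5,1/5,0,0,0,0,1/5],
  [0,0,0,0,0,0,0,0,0,0,1,0,0,0,0],
  [0,0,0,0,0,0,0,0,0,0,0,1/4,1/4,1/4,1/4]]"
definition BtB :: "real list list" where "BtB = [[1/2,1/2,0,0,0,0,0],
  [1/2,0,1/2,0,0,0,0],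
  [1/2,0,0,1/2,0,0,0],
  [1/2,0,0,0,1/2,0,0],
  [0,1/2,1/2,0,0,0,0],
  [0,1/2,0,1/2,0,0,0],
  [0,1/2,0,0,1/2,0,0],
  [0,0,1/2,1/2,0,0,0],
  [0,0,1/2,0,1/2,0,0],
  [0,0,0,1/2,1/2,0,0],
  [1/2,0,0,0,0,1/2,0],
  [0,1/2,0,0,0,0,1/2],
  [0,0,1/2,0,0,0,1/2],
  [0,0,0,1/2,0,0,1/2],
  [0,0,0,0,1/2,0,1/2]]"

lemma edgeA: "\<forall>x\<in>set vs0. \<forall>y\<in>set vs0. {x, y} \<in> edges SK5hat_A \<longleftrightarrow> adjv {1,2} x y"
  using edge_adj[of _ "{1,2}"] verts_A unfolding SK5hat_A_def by auto

lemma LA: "op_mat (std_lap SK5hat_A) vs0 = four_block_mat (1\<^sub>m 7) (mat_of_rows_list 15 (map (map uminus) BdA))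
   (mat_of_rows_list 7 (map (map uminus) BtA)) (1\<^sub>m 15)"
  unfolding op_mat_rows(1)[OF verts_A distinct_vs0 edgeA] length_vs0 one_rows
  apply (subst four_block_rows)
  apply (simp_all add: BdA_def BtA_def upt_rec)
  apply (simp add: vs0_def EKlist_def doubleton_eq_iff)
  done


lemma edgeB: "\<forall>x\<in>set vs0. \<forall>y\<in>set vs0. {x, y} \<in> edges SK5hat_B \<longleftrightarrow> adjv {1} x y"
  using edge_adj[of _ "{1}"] verts_B unfolding SK5hat_B_def by auto

lemma LA_s: "op_mat (signless_std_lap SK5hat_A) vs0 = four_block_mat (1\<^sub>m 7) (mat_of_rows_list 15 BdA)
   (mat_of_rows_list 7 BtA) (1\<^sub>m 15)"
  unfolding op_mat_rows(2)[OF verts_A distinct_vs0 edgeA] length_vs0 one_rows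
  apply (subst four_block_rows)
  apply (simp_all add: BdA_def BtA_def upt_rec)
  apply (simp add: vs0_def EKlist_def doubleton_eq_iff)
  done

lemma LB: "op_mat (std_lap SK5hat_B) vs0 = four_block_mat (1\<^sub>m 7) (mat_of_rows_list 15 (map (map uminus) BdB))
   (mat_of_rows_list 7 (map (map uminus) BtB)) (1\<^sub>m 15)"
  unfolding op_mat_rows(1)[OF verts_B distinct_vs0 edgeB] length_vs0 one_rows
  apply (subst four_block_rows)
  apply (simp_all add: BdB_def BtB_def upt_rec)
  apply (simp add: vs0_def EKlist_def doubleton_eq_iff)
  done

lemma LB_s: "op_mat (signless_std_lap SK5hat_B) vs0 = four_block_mat (1\<^sub>m 7) (mat_of_rows_list 15 BdB)
   (mat_of_rows_list 7 BtB) (1\<^sub>m 15)"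
  unfolding op_mat_rows(2)[OF verts_B distinct_vs0 edgeB] length_vs0 one_rows
  apply (subst four_block_rows)
  apply (simp_all add: BdB_def BtB_def upt_rec)
  apply (simp add: vs0_def EKlist_def doubleton_eq_iff)
  done

lemma prodA: "mat_of_rows_list 15 (map (map uminus) BdA) * mat_of_rows_list 7 (map (map uminus) BtA) = CA"
  unfolding CA_def BdA_def BtA_def by (simp add: lmul_correct' lmul_def upt_rec)
lemma prodA_s: "mat_of_rows_list 15 BdA * mat_of_rows_list 7 BtA = CA"
  unfolding CA_def BdA_def BtA_def by (simp add: lmul_correct' lmul_def upt_rec)
lemma prodB: "mat_of_rows_list 15 (map (map uminus) BdB) * mat_of_rows_list 7 (map (map uminus) BtB) = CB"
  unfolding CB_def BdB_def BtB_def by (simp add: lmul_correct' lmul_def upt_rec)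
lemma prodB_s: "mat_of_rows_list 15 BdB * mat_of_rows_list 7 BtB = CB"
  unfolding CB_def BdB_def BtB_def by (simp add: lmul_correct' lmul_def upt_rec)

lemma final_from_C:
  assumes C: "char_poly C = char_poly T7" and B: "B \<in> carrier_mat 7 15" and Cc: "Cc \<in> carrier_mat 15 7"
    and BC: "B * Cc = C"
  shows "char_poly (four_block_mat (1\<^sub>m 7) B Cc (1\<^sub>m 15)) = (\<Prod>l\<leftarrow>spec9. [:- l, 1:])"
proof -
  have "char_poly (four_block_mat (1\<^sub>m 7) B Cc (1\<^sub>m 15))
     = pcompose (char_poly (B * Cc)) ([:-1,1:] * [:-1,1:]) * [:-1,1:] ^ 8"
    by (rule char_poly_bip[OF B Cc], simp)
  also have "\<dots> = (\<Prod>l\<leftarrow>spec9. [:- l, 1:])"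
    unfolding BC C cpT7 by (rule target_poly)
  finally show ?thesis .
qed

lemma carrier_BA: "mat_of_rows_list 15 (map (map uminus) BdA) \<in> carrier_mat 7 15"
  "mat_of_rows_list 7 (map (map uminus) BtA) \<in> carrier_mat 15 7"
  "mat_of_rows_list 15 BdA \<in> carrier_mat 7 15" "mat_of_rows_list 7 BtA \<in> carrier_mat 15 7"
  "mat_of_rows_list 15 (map (map uminus) BdB) \<in> carrier_mat 7 15"
  "mat_of_rows_list 7 (map (map uminus) BtB) \<in> carrier_mat 15 7"
  "mat_of_rows_list 15 BdB \<in> carrier_mat 7 15" "mat_of_rows_list 7 BtB \<in> carrier_mat 15 7"
  by (simp_all add: carrier_rows BdA_def BtA_def BdB_def BtB_def)

lemma cpA0: "char_poly (op_mat (std_lap SK5hat_A) vs0) = (\<Prod>l\<leftarrow>spec9. [:- l, 1:])"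
  unfolding LA by (rule final_from_C[OF cpA carrier_BA(1,2) prodA])
lemma cpA0_s: "char_poly (op_mat (signless_std_lap SK5hat_A) vs0) = (\<Prod>l\<leftarrow>spec9. [:- l, 1:])"
  unfolding LA_s by (rule final_from_C[OF cpA carrier_BA(3,4) prodA_s])
lemma cpB0: "char_poly (op_mat (std_lap SK5hat_B) vs0) = (\<Prod>l\<leftarrow>spec9. [:- l, 1:])"
  unfolding LB by (rule final_from_C[OF cpB carrier_BA(5,6) prodB])
lemma cpB0_s: "char_poly (op_mat (signless_std_lap SK5hat_B) vs0) = (\<Prod>l\<leftarrow>spec9. [:- l, 1:])"
  unfolding LB_s by (rule final_from_C[OF cpB carrier_BA(7,8) prodB_s])

lemma nbrs_vs0:
  assumes V: "verts G = set vs0" and A: "\<forall>x\<in>set vs0. \<forall>y\<in>set vs0. {x, y} \<in> edges G \<longleftrightarrow> R x y"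
    and v: "v \<in> set vs0"
  shows "deg G v = length (filter (\<lambda>u. R u v) vs0)"
proof -
  have N: "nbrs G v = set (filter (\<lambda>u. R u v) vs0)"
    unfolding nbrs_def V using A v by auto
  have "card (set (filter (\<lambda>u. R u v) vs0)) = length (filter (\<lambda>u. R u v) vs0)"
    by (rule distinct_card) (simp add: distinct_vs0)
  then show ?thesis by (simp only: deg_def N)
qed

lemma degA: "v \<in> set vs0 \<Longrightarrow> 2 \<le> deg SK5hat_A v"
proof -
  assume v: "v \<in> set vs0"
  have "\<forall>v\<in>set vs0. 2 \<le> length (filter (\<lambda>u. adjv {1,2} u v) vs0)"
    by (simp add: vs0_def EKlist_def)
  then show ?thesis using nbrs_vs0[OF verts_A edgeA v] v by simp
qed

lemma degB: "deg SK5hat_B (Inl (P 0)) = 1"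
proof -
  have v: "Inl (P 0) \<in> set vs0" by (simp add: vs0_def)
  have "length (filter (\<lambda>u. adjv {1} u (Inl (P 0))) vs0) = 1"
    by (simp add: vs0_def EKlist_def)
  then show ?thesis using nbrs_vs0[OF verts_B edgeB v] by simp
qed

lemma not_iso: "\<not> graph_iso SK5hat_A SK5hat_B"
proof
  assume "graph_iso SK5hat_A SK5hat_B"
  then obtain f where bij: "bij_betw f (verts SK5hat_A) (verts SK5hat_B)"
    and E: "\<forall>x\<in>verts SK5hat_A. \<forall>y\<in>verts SK5hat_A. {x, y} \<in> edges SK5hat_A \<longleftrightarrow> {f x, f y} \<in> edges SK5hat_B"
    unfolding graph_iso_def by blast
  have z: "Inl (P 0) \<in> verts SK5hat_B" by (simp add: verts_B vs0_def)
  then have "Inl (P 0) \<in> f ` verts SK5hat_A" using bij by (simp add: bij_betw_def)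
  then obtain x where x: "x \<in> verts SK5hat_A" and fx: "f x = Inl (P 0)" by (metis imageE)
  have inj: "inj_on f (verts SK5hat_A)" using bij bij_betw_def by blast
  have "nbrs SK5hat_B (f x) = f ` nbrs SK5hat_A x"
  proof
    show "f ` nbrs SK5hat_A x \<subseteq> nbrs SK5hat_B (f x)"
      using E x bij unfolding nbrs_def bij_betw_def by auto
    show "nbrs SK5hat_B (f x) \<subseteq> f ` nbrs SK5hat_A x"
    proof
      fix w assume w: "w \<in> nbrs SK5hat_B (f x)"
      then have "w \<in> verts SK5hat_B" unfolding nbrs_def by simp
      then obtain u where u: "u \<in> verts SK5hat_A" "w = f u" using bij unfolding bij_betw_def by auto
      then have "{u, x} \<in> edges SK5hat_A" using E x w unfolding nbrs_def by auto
      then show "w \<in> f ` nbrs SK5hat_A x" using u unfolding nbrs_def by auto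
    qed
  qed
  moreover have "inj_on f (nbrs SK5hat_A x)" using inj by (rule inj_on_subset) (auto simp: nbrs_def)
  ultimately have "deg SK5hat_B (f x) = deg SK5hat_A x" unfolding deg_def by (simp add: card_image)
  then have "deg SK5hat_A x = 1" using degB fx by simp
  moreover have "2 \<le> deg SK5hat_A x" using degA x verts_A by simp
  ultimately show False by simp
qed

theorem mainTheorem9:
  shows "card (verts SK5hat_A) = 22 \<and> card (verts SK5hat_B) = 22
    \<and> \<not> graph_iso SK5hat_A SK5hat_B
    \<and> (\<forall>vs. enumerates SK5hat_A vs \<longrightarrow> has_spectrum (op_mat (std_lap SK5hat_A) vs) spec9)
    \<and> (\<forall>vs. enumerates SK5hat_B vs \<longrightarrow> has_spectrum (op_mat (std_lap SK5hat_B) vs) spec9)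
    \<and> (\<forall>vs ws. enumerates SK5hat_A vs \<longrightarrow> enumerates SK5hat_B ws \<longrightarrow>
         char_poly (op_mat (signless_std_lap SK5hat_A) vs)
           = char_poly (op_mat (signless_std_lap SK5hat_B) ws))"
proof (intro conjI allI impI)
  show "card (verts SK5hat_A) = 22" unfolding verts_A
    using distinct_card[OF distinct_vs0] length_vs0 by simp
  show "card (verts SK5hat_B) = 22" unfolding verts_B
    using distinct_card[OF distinct_vs0] length_vs0 by simp
  show "\<not> graph_iso SK5hat_A SK5hat_B" by (rule not_iso)
next
  fix vs assume "enumerates SK5hat_A vs"
  then have "distinct vs" "set vs = set vs0" unfolding enumerates_def verts_A by auto
  then show "has_spectrum (op_mat (std_lap SK5hat_A) vs) spec9"
    unfolding has_spectrum_def using op_mat_enum[OF _ distinct_vs0] cpA0 by metis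
next
  fix vs assume "enumerates SK5hat_B vs"
  then have "distinct vs" "set vs = set vs0" unfolding enumerates_def verts_B by auto
  then show "has_spectrum (op_mat (std_lap SK5hat_B) vs) spec9"
    unfolding has_spectrum_def using op_mat_enum[OF _ distinct_vs0] cpB0 by metis
next
  fix vs ws assume a: "enumerates SK5hat_A vs" and b: "enumerates SK5hat_B ws"
  from a have "distinct vs" "set vs = set vs0" unfolding enumerates_def verts_A by auto
  then have 1: "char_poly (op_mat (signless_std_lap SK5hat_A) vs) = (\<Prod>l\<leftarrow>spec9. [:- l, 1:])"
    using op_mat_enum[OF _ distinct_vs0] cpA0_s by metis
  from b have "distinct ws" "set ws = set vs0" unfolding enumerates_def verts_B by auto
  then have 2: "char_poly (op_mat (signless_std_lap SK5hat_B) ws) = (\<Prod>l\<leftarrow>spec9. [:- l, 1:])"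
    using op_mat_enum[OF _ distinct_vs0] cpB0_s by metis
  show "char_poly (op_mat (signless_std_lap SK5hat_A) vs) = char_poly (op_mat (signless_std_lap SK5hat_B) ws)"
    using 1 2 by simp
qed

end
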